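(* Let $m\in\mathbb{Z}_{\ge0}$. In $\mathbb{R}^{2m+6}$ with standard basis $e_0,\ldots,e_{2m+5}$, let $\rho=\frac12\sum_re_r$, $v_S=\sum_{r\in S}e_r$ for $S\subset\{0,\ldots,2m+5\}$ with $|S|=m+1$, and $w_{ij}=\rho-e_i-e_j$. Let $P^{(m)}$ be the convex hull of all $v_S$ and all $w_{ij}$ ($0\le i<j\le 2m+5$); $P_{\rm I}$ the convex hull of all $v_S$; $P_{\rm II}$ the convex hull of the $v_S$ with $S\subset\{1,\ldots,2m+5\}$ and the $w_{0j}$ ($1\le j\le 2m+5$); $P_{\rm III}$ the convex hull of the $v_S$ with $S\subset\{3,\ldots,2m+5\}$ and the $w_{ij}$ ($0\le i<j\le2$). For $\sigma\in S_{2m+6}$ acting by permuting coordinates, write $\sigma(A)=\{\sigma(a):a\in A\}$. Then \[P^{(m)}=P_{\rm I}\cup\bigcup_{\sigma\in S_{2m+6}}\sigma(P_{\rm II})\cup\bigcup_{\sigma\in S_{2m+6}}\sigma(P_{\rm III}).\] *)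

theory Defs
  imports "HOL-Analysis.Analysis"
begin

text \<open>Vectors of R^N are modelled as functions nat => real, supported on {0..<N}.
  Convex hull: the set of all finite convex combinations of points of A.\<close>

definition cvx_hull :: "(nat \<Rightarrow> real) set \<Rightarrow> (nat \<Rightarrow> real) set" where
  "cvx_hull A = {x. \<exists>F u. finite F \<and> F \<subseteq> A \<and> F \<noteq> {} \<and> (\<forall>a\<in>F. 0 \<le> u a) \<and>
      sum u F = 1 \<and> x = (\<lambda>k. \<Sum>a\<in>F. u a * a k)}"

definition e_vec :: "nat \<Rightarrow> nat \<Rightarrow> real" where
  "e_vec r = (\<lambda>k. if k = r then 1 else 0)"

definition rho_vec :: "nat \<Rightarrow> nat \<Rightarrow> real" where
  "rho_vec N = (\<lambda>k. \<Sum>r<N. (1/2) * e_vec r k)"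

definition v_vec :: "nat set \<Rightarrow> nat \<Rightarrow> real" where
  "v_vec S = (\<lambda>k. \<Sum>r\<in>S. e_vec r k)"

definition w_vec :: "nat \<Rightarrow> nat \<Rightarrow> nat \<Rightarrow> nat \<Rightarrow> real" where
  "w_vec N i j = (\<lambda>k. rho_vec N k - e_vec i k - e_vec j k)"

text \<open>A permutation sigma of {0..<N} acts by permuting coordinates, sigma(e_r) = e_(sigma r).\<close>
definition perm_act :: "(nat \<Rightarrow> nat) \<Rightarrow> (nat \<Rightarrow> real) \<Rightarrow> nat \<Rightarrow> real" where
  "perm_act \<sigma> x = (\<lambda>k. x (inv \<sigma> k))"

definition P_full :: "nat \<Rightarrow> (nat \<Rightarrow> real) set" where
  "P_full m = cvx_hull ({v_vec S | S. S \<subseteq> {0..<2*m+6} \<and> card S = m+1}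
      \<union> {w_vec (2*m+6) i j | i j. i < j \<and> j < 2*m+6})"

definition P_I :: "nat \<Rightarrow> (nat \<Rightarrow> real) set" where
  "P_I m = cvx_hull {v_vec S | S. S \<subseteq> {0..<2*m+6} \<and> card S = m+1}"

definition P_II :: "nat \<Rightarrow> (nat \<Rightarrow> real) set" where
  "P_II m = cvx_hull ({v_vec S | S. S \<subseteq> {1..<2*m+6} \<and> card S = m+1}
      \<union> {w_vec (2*m+6) 0 j | j. 1 \<le> j \<and> j < 2*m+6})"

definition P_III :: "nat \<Rightarrow> (nat \<Rightarrow> real) set" where
  "P_III m = cvx_hull ({v_vec S | S. S \<subseteq> {3..<2*m+6} \<and> card S = m+1}
      \<union> {w_vec (2*m+6) i j | i j. i < j \<and> j \<le> 2})"

end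

theory Submission
  imports Defs "HOL-Combinatorics.Permutations"
begin

lemma sum_restrict:
  assumes "finite G" "B \<subseteq> G"
  shows "(\<Sum>a\<in>G. if a \<in> B then f a else 0) = sum f B"
proof -
  have "sum f (G \<inter> B) = (\<Sum>a\<in>G. if a \<in> B then f a else 0)"
    using assms(1) by (rule sum.inter_restrict)
  moreover have "G \<inter> B = B" using assms(2) by blast
  ultimately show ?thesis by simp
qed

lemma cvx_hull_mono: "A \<subseteq> B \<Longrightarrow> cvx_hull A \<subseteq> cvx_hull B"
  unfolding cvx_hull_def by blast

lemma cvx_hull_inc: "a \<in> A \<Longrightarrow> a \<in> cvx_hull A"
  unfolding cvx_hull_def
  by (rule CollectI, rule exI[of _ "{a}"], rule exI[of _ "\<lambda>_. 1"]) auto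

lemma cvx_sum:
  assumes I: "finite I" "I \<noteq> {}" and c: "\<forall>i\<in>I. 0 \<le> c i" "sum c I = 1"
    and p: "\<forall>i\<in>I. p i \<in> cvx_hull A"
  shows "(\<lambda>k. \<Sum>i\<in>I. c i * p i k) \<in> cvx_hull A"
proof -
  have "\<forall>i\<in>I. \<exists>F u. finite F \<and> F \<subseteq> A \<and> F \<noteq> {} \<and> (\<forall>a\<in>F. 0 \<le> u a) \<and>
      sum u F = 1 \<and> p i = (\<lambda>k. \<Sum>a\<in>F. u a * a k)"
    using p unfolding cvx_hull_def by blast
  then obtain F where F: "\<forall>i\<in>I. \<exists>u. finite (F i) \<and> F i \<subseteq> A \<and> F i \<noteq> {} \<and> (\<forall>a\<in>F i. 0 \<le> u a) \<and>
      sum u (F i) = 1 \<and> p i = (\<lambda>k. \<Sum>a\<in>F i. u a * a k)"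
    by (auto dest!: bchoice)
  from bchoice[OF F] obtain u where Fu: "\<forall>i\<in>I. finite (F i) \<and> F i \<subseteq> A \<and> F i \<noteq> {} \<and> (\<forall>a\<in>F i. 0 \<le> u i a) \<and>
      sum (u i) (F i) = 1 \<and> p i = (\<lambda>k. \<Sum>a\<in>F i. u i a * a k)"
    by blast
  define G where "G = (\<Union>i\<in>I. F i)"
  define v where "v a = (\<Sum>i\<in>I. c i * (if a \<in> F i then u i a else 0))" for a
  have fG: "finite G" unfolding G_def using I Fu by auto
  have sub: "\<And>i. i \<in> I \<Longrightarrow> F i \<subseteq> G" unfolding G_def by auto
  have "G \<subseteq> A" unfolding G_def using Fu by auto
  moreover have "G \<noteq> {}" unfolding G_def using Fu I by auto
  moreover have "\<forall>a\<in>G. 0 \<le> v a" unfolding v_def using Fu c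
    by (auto intro!: sum_nonneg mult_nonneg_nonneg)
  moreover have "sum v G = 1"
  proof -
    have "sum v G = (\<Sum>i\<in>I. c i * (\<Sum>a\<in>G. if a \<in> F i then u i a else 0))"
      unfolding v_def by (subst sum.swap) (simp add: sum_distrib_left)
    also have "\<dots> = (\<Sum>i\<in>I. c i * sum (u i) (F i))"
      by (rule sum.cong, simp, subst sum_restrict[OF fG sub], auto)
    also have "\<dots> = sum c I" using Fu by simp
    finally show ?thesis using c by simp
  qed
  moreover have "(\<lambda>k. \<Sum>i\<in>I. c i * p i k) = (\<lambda>k. \<Sum>a\<in>G. v a * a k)"
  proof
    fix k
    have "(\<Sum>a\<in>G. v a * a k) = (\<Sum>i\<in>I. c i * (\<Sum>a\<in>G. if a \<in> F i then u i a * a k else 0))"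
      unfolding v_def sum_distrib_right
      by (subst sum.swap) (auto simp add: sum_distrib_left intro!: sum.cong)
    also have "\<dots> = (\<Sum>i\<in>I. c i * (\<Sum>a\<in>F i. u i a * a k))"
      by (rule sum.cong, simp, subst sum_restrict[OF fG sub], auto)
    also have "\<dots> = (\<Sum>i\<in>I. c i * p i k)" using Fu by simp
    finally show "(\<Sum>i\<in>I. c i * p i k) = (\<Sum>a\<in>G. v a * a k)" by simp
  qed
  ultimately show ?thesis unfolding cvx_hull_def using fG by blast
qed

lemma cvx_two:
  assumes "p \<in> cvx_hull A" "q \<in> cvx_hull A" "0 \<le> t" "t \<le> 1"
  shows "(\<lambda>k. t * p k + (1 - t) * q k) \<in> cvx_hull A"
proof -
  have "(\<lambda>k. \<Sum>i\<in>{True, False}. (if i then t else 1 - t) * (if i then p else q) k) \<in> cvx_hull A"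
    by (rule cvx_sum) (use assms in auto)
  then show ?thesis by simp
qed

lemma e_vec_apply: "e_vec r k = (if k = r then 1 else 0)" by (simp add: e_vec_def)

lemma v_vec_apply: "finite S \<Longrightarrow> v_vec S k = (if k \<in> S then 1 else 0)"
  by (simp add: v_vec_def e_vec_def)

lemma rho_apply: "rho_vec N k = (if k < N then 1/2 else 0)"
  unfolding rho_vec_def e_vec_def by (subst sum_distrib_left[symmetric]) simp

lemma w_apply: "w_vec N i j k = (if k < N then 1/2 else 0) - (if k = i then 1 else 0) - (if k = j then 1 else 0)"
  by (simp add: w_vec_def rho_apply e_vec_def)

lemma w_sym: "w_vec N i j = w_vec N j i"
  by (auto simp add: w_apply)

lemma perm_v:
  assumes "\<sigma> permutes {0..<N}" "finite S"
  shows "perm_act \<sigma> (v_vec S) = v_vec (\<sigma> ` S)"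
proof
  fix k
  have "inv \<sigma> k \<in> S \<longleftrightarrow> k \<in> \<sigma> ` S"
    using permutes_inverses[OF assms(1)] by (metis image_iff)
  then show "perm_act \<sigma> (v_vec S) k = v_vec (\<sigma> ` S) k"
    using assms by (simp add: perm_act_def v_vec_apply)
qed

lemma perm_w:
  assumes "\<sigma> permutes {0..<N}"
  shows "perm_act \<sigma> (w_vec N i j) = w_vec N (\<sigma> i) (\<sigma> j)"
proof
  fix k
  have 1: "inv \<sigma> k < N \<longleftrightarrow> k < N"
    using permutes_in_image[OF permutes_inv[OF assms]] by simp
  have 2: "inv \<sigma> k = i \<longleftrightarrow> k = \<sigma> i" for i
    using permutes_inverses[OF assms] by metis
  show "perm_act \<sigma> (w_vec N i j) k = w_vec N (\<sigma> i) (\<sigma> j) k"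
    by (simp add: perm_act_def w_apply 1 2)
qed

lemma perm_hull:
  assumes "\<forall>a\<in>A. perm_act \<sigma> a \<in> B"
  shows "perm_act \<sigma> ` cvx_hull A \<subseteq> cvx_hull B"
proof
  fix y assume "y \<in> perm_act \<sigma> ` cvx_hull A"
  then obtain p where p: "p \<in> cvx_hull A" "y = perm_act \<sigma> p" by auto
  then obtain F u where Fu: "finite F" "F \<subseteq> A" "F \<noteq> {}" "\<forall>a\<in>F. 0 \<le> u a" "sum u F = 1"
     "p = (\<lambda>k. \<Sum>a\<in>F. u a * a k)" unfolding cvx_hull_def by blast
  have "(\<lambda>k. \<Sum>a\<in>F. u a * perm_act \<sigma> a k) \<in> cvx_hull B"
    using Fu assms by (intro cvx_sum) (auto intro: cvx_hull_inc)
  moreover have "y = (\<lambda>k. \<Sum>a\<in>F. u a * perm_act \<sigma> a k)"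
    using p Fu by (simp add: perm_act_def)
  ultimately show "y \<in> cvx_hull B" by simp
qed

definition gens_full :: "nat \<Rightarrow> (nat \<Rightarrow> real) set" where
  "gens_full m = {v_vec S | S. S \<subseteq> {0..<2*m+6} \<and> card S = m+1}
      \<union> {w_vec (2*m+6) i j | i j. i < j \<and> j < 2*m+6}"

lemma perm_v_gen:
  assumes "\<sigma> permutes {0..<2*m+6}" "S \<subseteq> {0..<2*m+6}" "card S = m+1"
  shows "perm_act \<sigma> (v_vec S) \<in> gens_full m"
proof -
  have fS: "finite S" using assms(2) finite_subset by blast
  have "\<sigma> ` S \<subseteq> {0..<2*m+6}" using assms(1,2) permutes_in_image by fastforce
  moreover have "card (\<sigma> ` S) = m+1"
    using assms(3) card_image permutes_inj[OF assms(1)] by (metis inj_on_subset subset_UNIV)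
  ultimately show ?thesis unfolding gens_full_def using perm_v[OF assms(1) fS] by blast
qed

lemma perm_w_gen:
  assumes "\<sigma> permutes {0..<2*m+6}" "i \<noteq> j" "i < 2*m+6" "j < 2*m+6"
  shows "perm_act \<sigma> (w_vec (2*m+6) i j) \<in> gens_full m"
proof -
  have a: "\<sigma> i < 2*m+6" "\<sigma> j < 2*m+6" using assms permutes_in_image by fastforce+
  have b: "\<sigma> i \<noteq> \<sigma> j" using assms(2) permutes_inj[OF assms(1)] by (meson injD)
  show ?thesis
  proof (cases "\<sigma> i < \<sigma> j")
    case True then show ?thesis unfolding gens_full_def perm_w[OF assms(1)] using a by blast
  next
    case False then have "\<sigma> j < \<sigma> i" using b by simp
    then show ?thesis unfolding gens_full_def perm_w[OF assms(1)] w_sym[of _ "\<sigma> i"] using a by blast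
  qed
qed

lemma supset:
  "P_I m \<union> (\<Union>\<sigma>\<in>{\<sigma>. \<sigma> permutes {0..<2*m+6}}. perm_act \<sigma> ` P_II m)
     \<union> (\<Union>\<sigma>\<in>{\<sigma>. \<sigma> permutes {0..<2*m+6}}. perm_act \<sigma> ` P_III m) \<subseteq> P_full m"
proof -
  have PF: "P_full m = cvx_hull (gens_full m)" unfolding P_full_def gens_full_def ..
  have "P_I m \<subseteq> P_full m" unfolding PF P_I_def gens_full_def by (rule cvx_hull_mono) blast
  moreover have "perm_act \<sigma> ` P_II m \<subseteq> P_full m" if s: "\<sigma> permutes {0..<2*m+6}" for \<sigma>
    unfolding PF P_II_def
  proof (rule perm_hull, rule ballI)
    fix a assume "a \<in> {v_vec S |S. S \<subseteq> {1..<2 * m + 6} \<and> card S = m + 1} \<union>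
             {w_vec (2 * m + 6) 0 j |j. 1 \<le> j \<and> j < 2 * m + 6}"
    then show "perm_act \<sigma> a \<in> gens_full m"
    proof
      assume "a \<in> {v_vec S |S. S \<subseteq> {1..<2 * m + 6} \<and> card S = m + 1}"
      then obtain S where S: "a = v_vec S" "S \<subseteq> {1..<2*m+6}" "card S = m+1" by auto
      have "S \<subseteq> {0..<2*m+6}" using S(2) by (auto simp: subset_iff)
      then show ?thesis using perm_v_gen[OF s, of S] S by auto
    next
      assume "a \<in> {w_vec (2 * m + 6) 0 j |j. 1 \<le> j \<and> j < 2 * m + 6}"
      then obtain j where "a = w_vec (2*m+6) 0 j" "1 \<le> j" "j < 2*m+6" by auto
      then show ?thesis using perm_w_gen[OF s, of 0 j] by simp
    qed
  qed
  moreover have "perm_act \<sigma> ` P_III m \<subseteq> P_full m" if s: "\<sigma> permutes {0..<2*m+6}" for \<sigma>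
    unfolding PF P_III_def
  proof (rule perm_hull, rule ballI)
    fix a assume "a \<in> {v_vec S |S. S \<subseteq> {3..<2 * m + 6} \<and> card S = m + 1} \<union>
             {w_vec (2 * m + 6) i j |i j. i < j \<and> j \<le> 2}"
    then show "perm_act \<sigma> a \<in> gens_full m"
    proof
      assume "a \<in> {v_vec S |S. S \<subseteq> {3..<2 * m + 6} \<and> card S = m + 1}"
      then obtain S where S: "a = v_vec S" "S \<subseteq> {3..<2*m+6}" "card S = m+1" by auto
      have "S \<subseteq> {0..<2*m+6}" using S(2) by (auto simp: subset_iff)
      then show ?thesis using perm_v_gen[OF s, of S] S by auto
    next
      assume "a \<in> {w_vec (2 * m + 6) i j |i j. i < j \<and> j \<le> 2}"
      then obtain i j where "a = w_vec (2*m+6) i j" "i < j" "j \<le> 2" by auto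
      then show ?thesis using perm_w_gen[OF s, of i j] by simp
    qed
  qed
  ultimately show ?thesis by blast
qed

lemma hyper_aux:
  fixes z :: "nat \<Rightarrow> real"
  shows "card {r\<in>A. 0 < z r \<and> z r < 1} = n \<Longrightarrow> finite A \<Longrightarrow> \<forall>r\<in>A. 0 \<le> z r \<and> z r \<le> 1 \<Longrightarrow>
    \<forall>r. r \<notin> A \<longrightarrow> z r = 0 \<Longrightarrow> sum z A = real k \<Longrightarrow>
    z \<in> cvx_hull {v_vec S | S. S \<subseteq> A \<and> card S = k}"
proof (induction n arbitrary: z rule: less_induct)
  case (less n z)
  note fA = less.prems(2)
  define Fr where "Fr z = {r\<in>A. 0 < z r \<and> z r < 1}" for z :: "nat \<Rightarrow> real"
  show ?case
  proof (cases "Fr z = {}")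
    case True
    define S where "S = {r\<in>A. z r = 1}"
    have SA: "S \<subseteq> A" unfolding S_def by auto
    then have fS: "finite S" using fA finite_subset by blast
    have zv: "z = v_vec S"
    proof
      fix k show "z k = v_vec S k"
      proof (cases "k \<in> A")
        case True
        then have "z k = 0 \<or> z k = 1" using less.prems(3) \<open>Fr z = {}\<close> unfolding Fr_def by force
        then show ?thesis using True unfolding v_vec_apply[OF fS] unfolding S_def by auto
      next
        case False then show ?thesis using less.prems(4) SA by (auto simp: v_vec_apply[OF fS])
      qed
    qed
    have "sum z A = (\<Sum>r\<in>A. if r \<in> S then 1 else 0)" unfolding zv by (simp add: v_vec_apply[OF fS])
    also have "\<dots> = real (card S)" using sum_restrict[OF fA SA, of "\<lambda>_. 1::real"] by simp
    finally have "card S = k" using less.prems(5) by simp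
    then show ?thesis using zv SA by (intro cvx_hull_inc) blast
  next
    case False
    then obtain i where i: "i \<in> Fr z" by blast
    have "\<exists>j. j \<in> Fr z \<and> j \<noteq> i"
    proof (rule ccontr)
      assume "\<not> ?thesis"
      then have nf: "\<forall>r\<in>A - {i}. z r = 0 \<or> z r = 1" using less.prems(3) unfolding Fr_def by force
      define T where "T = {r\<in>A - {i}. z r = 1}"
      have TA: "T \<subseteq> A - {i}" unfolding T_def by auto
      have "sum z (A - {i}) = (\<Sum>r\<in>A - {i}. if r \<in> T then 1 else 0)"
        by (rule sum.cong) (use nf in \<open>auto simp: T_def\<close>)
      also have "\<dots> = real (card T)" using sum_restrict[OF _ TA, of "\<lambda>_. 1::real"] fA by simp
      finally have "sum z A = z i + real (card T)"
        using sum.remove[OF fA, of i z] i unfolding Fr_def by auto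
      then have "real k - real (card T) = z i" using less.prems(5) by simp
      then have "0 < real k - real (card T)" "real k - real (card T) < 1" using i unfolding Fr_def by auto
      then have "card T < k" "k < card T + 1" by linarith+
      then show False by simp
    qed
    then obtain j where j: "j \<in> Fr z" "j \<noteq> i" by blast
    have zi: "i \<in> A" "0 < z i" "z i < 1" and zj: "j \<in> A" "0 < z j" "z j < 1"
      using i j unfolding Fr_def by auto
    define s where "s = min (1 - z i) (z j)"
    define t where "t = min (z i) (1 - z j)"
    have s: "0 < s" "s \<le> 1 - z i" "s \<le> z j" using zi zj unfolding s_def by auto
    have t: "0 < t" "t \<le> z i" "t \<le> 1 - z j" using zi zj unfolding t_def by auto
    define z1 where "z1 k = z k + s * (e_vec i k - e_vec j k)" for k
    define z2 where "z2 k = z k - t * (e_vec i k - e_vec j k)" for k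
    have sumd: "sum (\<lambda>k. e_vec i k - e_vec j k) A = 0"
      using zi(1) zj(1) fA by (simp add: sum_subtractf e_vec_apply)
    have IH1: "z1 \<in> cvx_hull {v_vec S | S. S \<subseteq> A \<and> card S = k}"
    proof (rule less.IH[OF _ refl fA])
      have "Fr z1 \<subseteq> Fr z" using zi zj s j(2) unfolding Fr_def z1_def by (auto simp: e_vec_apply)
      moreover have "Fr z1 \<noteq> Fr z"
      proof
        assume eq: "Fr z1 = Fr z"
        have "z1 i = z i + s" "z1 j = z j - s" using j(2) by (auto simp: z1_def e_vec_apply)
        note vals = this
        have "i \<in> Fr z1" "j \<in> Fr z1" using eq i j(1) by auto
        then have "z1 i < 1" "0 < z1 j" unfolding Fr_def by auto
        then show False using vals unfolding s_def by (auto split: if_splits simp: min_def)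
      qed
      moreover have "finite (Fr z)" unfolding Fr_def using fA by auto
      ultimately have "card (Fr z1) < card (Fr z)" by (meson psubsetI psubset_card_mono)
      then show "card {r\<in>A. 0 < z1 r \<and> z1 r < 1} < n" using less.prems(1) unfolding Fr_def by simp
      show "\<forall>r\<in>A. 0 \<le> z1 r \<and> z1 r \<le> 1" using less.prems(3) s zi zj j(2)
        by (auto simp: z1_def e_vec_apply)
      show "\<forall>r. r \<notin> A \<longrightarrow> z1 r = 0" using less.prems(4) zi zj by (auto simp: z1_def e_vec_apply)
      show "sum z1 A = real k" using less.prems(5) sumd
        by (simp add: z1_def sum.distrib sum_distrib_left[symmetric])
    qed
    have IH2: "z2 \<in> cvx_hull {v_vec S | S. S \<subseteq> A \<and> card S = k}"
    proof (rule less.IH[OF _ refl fA])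
      have "Fr z2 \<subseteq> Fr z" using zi zj t j(2) unfolding Fr_def z2_def by (auto simp: e_vec_apply)
      moreover have "Fr z2 \<noteq> Fr z"
      proof
        assume eq: "Fr z2 = Fr z"
        have "z2 i = z i - t" "z2 j = z j + t" using j(2) by (auto simp: z2_def e_vec_apply)
        note vals = this
        have "i \<in> Fr z2" "j \<in> Fr z2" using eq i j(1) by auto
        then have "0 < z2 i" "z2 j < 1" unfolding Fr_def by auto
        then show False using vals unfolding t_def by (auto split: if_splits simp: min_def)
      qed
      moreover have "finite (Fr z)" unfolding Fr_def using fA by auto
      ultimately have "card (Fr z2) < card (Fr z)" by (meson psubsetI psubset_card_mono)
      then show "card {r\<in>A. 0 < z2 r \<and> z2 r < 1} < n" using less.prems(1) unfolding Fr_def by simp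
      show "\<forall>r\<in>A. 0 \<le> z2 r \<and> z2 r \<le> 1" using less.prems(3) t zi zj j(2)
        by (auto simp: z2_def e_vec_apply)
      show "\<forall>r. r \<notin> A \<longrightarrow> z2 r = 0" using less.prems(4) zi zj by (auto simp: z2_def e_vec_apply)
      show "sum z2 A = real k" using less.prems(5) sumd
        by (simp add: z2_def sum_subtractf sum_distrib_left[symmetric])
    qed
    have "(\<lambda>k. (t/(s+t)) * z1 k + (1 - t/(s+t)) * z2 k) \<in> cvx_hull {v_vec S | S. S \<subseteq> A \<and> card S = k}"
      using s t by (intro cvx_two IH1 IH2) auto
    moreover have "(\<lambda>k. (t/(s+t)) * z1 k + (1 - t/(s+t)) * z2 k) = z"
    proof
      fix k
      have e: "t * z1 k + s * z2 k = (s+t) * z k" unfolding z1_def z2_def by (simp add: algebra_simps)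
      have nz: "s + t \<noteq> 0" using s t by simp
      have "1 - t/(s+t) = s/(s+t)" using nz by (simp add: field_simps)
      then have "(t/(s+t)) * z1 k + (1 - t/(s+t)) * z2 k = (t * z1 k + s * z2 k)/(s+t)"
        by (simp add: add_divide_distrib)
      also have "\<dots> = z k" unfolding e using s t by simp
      finally show "(t/(s+t)) * z1 k + (1 - t/(s+t)) * z2 k = z k" .
    qed
    ultimately show ?thesis by simp
  qed
qed

lemma hyper:
  fixes z :: "nat \<Rightarrow> real"
  assumes "finite A" "\<forall>r\<in>A. 0 \<le> z r \<and> z r \<le> 1" "\<forall>r. r \<notin> A \<longrightarrow> z r = 0" "sum z A = real k"
  shows "z \<in> cvx_hull {v_vec S | S. S \<subseteq> A \<and> card S = k}"
  using hyper_aux[OF refl assms] .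

definition rep :: "nat \<Rightarrow> (nat \<Rightarrow> real) \<Rightarrow> real \<Rightarrow> (nat \<Rightarrow> real) \<Rightarrow> (nat \<Rightarrow> real) \<Rightarrow> bool" where
  "rep m x M z d \<longleftrightarrow> 0 \<le> M \<and> M \<le> 1 \<and>
     (\<forall>r<2*m+6. 0 \<le> z r \<and> z r \<le> 1 - M \<and> 0 \<le> d r \<and> d r \<le> M \<and> x r = z r + M/2 - d r) \<and>
     (\<forall>r\<ge>2*m+6. x r = 0) \<and> (\<Sum>r<2*m+6. z r) = (1 - M) * real (m+1) \<and> (\<Sum>r<2*m+6. d r) = 2*M"

lemma rep_v:
  assumes S: "S \<subseteq> {0..<2*m+6}" "card S = m+1"
  shows "rep m (v_vec S) 0 (v_vec S) (\<lambda>_. 0)"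
proof -
  have fS: "finite S" using S(1) finite_subset by blast
  have vS: "\<And>k. v_vec S k = (if k \<in> S then 1 else 0)" using v_vec_apply[OF fS] .
  have SS: "S \<subseteq> {..<2*m+6}" using S(1) by auto
  have "(\<Sum>r<2*m+6. v_vec S r) = (\<Sum>r\<in>{..<2*m+6}. if r \<in> S then 1 else 0)"
    unfolding vS ..
  also have "\<dots> = sum (\<lambda>_. 1::real) S" by (rule sum_restrict[OF finite_lessThan SS])
  also have "\<dots> = real (m+1)" using S(2) by simp
  finally have 1: "(\<Sum>r<2*m+6. v_vec S r) = (1 - 0) * real (m+1)" by simp
  have 2: "\<forall>r\<ge>2*m+6. v_vec S r = 0" using SS unfolding vS by auto
  have 3: "\<forall>r<2*m+6. 0 \<le> v_vec S r \<and> v_vec S r \<le> 1 - 0 \<and> 0 \<le> (0::real) \<and> (0::real) \<le> 0 \<and>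
     v_vec S r = v_vec S r + 0/2 - 0" unfolding vS by auto
  show ?thesis unfolding rep_def using 1 2 3 by (intro conjI) auto
qed

lemma rep_w:
  assumes ij: "i < j" "j < 2*m+6"
  shows "rep m (w_vec (2*m+6) i j) 1 (\<lambda>_. 0) (\<lambda>r. e_vec i r + e_vec j r)"
proof -
  have 1: "(\<Sum>r<2*m+6. e_vec i r + e_vec j r) = 2 * 1" using ij by (simp add: sum.distrib e_vec_apply)
  have 2: "\<forall>r\<ge>2*m+6. w_vec (2*m+6) i j r = 0" using ij by (auto simp: w_apply)
  have 3: "\<forall>r<2*m+6. 0 \<le> (0::real) \<and> (0::real) \<le> 1 - 1 \<and> 0 \<le> e_vec i r + e_vec j r \<and>
    e_vec i r + e_vec j r \<le> 1 \<and> w_vec (2*m+6) i j r = 0 + 1/2 - (e_vec i r + e_vec j r)"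
    using ij by (auto simp: e_vec_apply w_apply)
  have 4: "(\<Sum>r<2*m+6. (0::real)) = (1 - 1) * real (m+1)" by simp
  show ?thesis unfolding rep_def using 1 2 3 4 by (intro conjI) auto
qed

lemma rep_gen:
  assumes "a \<in> gens_full m"
  shows "\<exists>M z d. rep m a M z d"
proof -
  have "a \<in> {v_vec S |S. S \<subseteq> {0..<2*m+6} \<and> card S = m+1} \<or>
        a \<in> {w_vec (2*m+6) i j |i j. i < j \<and> j < 2*m+6}"
    using assms unfolding gens_full_def by blast
  then show ?thesis
  proof (elim disjE)
  assume "a \<in> {v_vec S |S. S \<subseteq> {0..<2*m+6} \<and> card S = m+1}"
  then obtain S where S: "a = v_vec S" "S \<subseteq> {0..<2*m+6}" "card S = m+1" by auto
  have "rep m a 0 (v_vec S) (\<lambda>_. 0)" unfolding S(1) by (rule rep_v[OF S(2,3)])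
  then show ?thesis by (rule exI[of _ 0, OF exI[of _ "v_vec S", OF exI[of _ "\<lambda>_. 0"]]])
next
  assume "a \<in> {w_vec (2*m+6) i j |i j. i < j \<and> j < 2*m+6}"
  then obtain i j where ij: "a = w_vec (2*m+6) i j" "i < j" "j < 2*m+6" by auto
  have "rep m a 1 (\<lambda>_. 0) (\<lambda>r. e_vec i r + e_vec j r)" unfolding ij(1) by (rule rep_w[OF ij(2,3)])
  then show ?thesis by (rule exI[of _ 1, OF exI[of _ "\<lambda>_. 0", OF exI[of _ "\<lambda>r. e_vec i r + e_vec j r"]]])
  qed
qed

lemma rep_hull:
  assumes "x \<in> cvx_hull (gens_full m)"
  shows "\<exists>M z d. rep m x M z d"
proof -
  obtain F u where Fu: "finite F" "F \<subseteq> gens_full m" "F \<noteq> {}" "\<forall>a\<in>F. 0 \<le> u a" "sum u F = 1"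
     "x = (\<lambda>k. \<Sum>a\<in>F. u a * a k)" using assms unfolding cvx_hull_def by blast
  have "\<forall>a\<in>F. \<exists>M z d. rep m a M z d" using Fu(2) rep_gen by blast
  then obtain Mf where "\<forall>a\<in>F. \<exists>z d. rep m a (Mf a) z d" by (auto dest!: bchoice)
  then obtain zf where "\<forall>a\<in>F. \<exists>d. rep m a (Mf a) (zf a) d" by (auto dest!: bchoice)
  then obtain df where R: "\<forall>a\<in>F. rep m a (Mf a) (zf a) (df a)" by (auto dest!: bchoice)
  define M where "M = (\<Sum>a\<in>F. u a * Mf a)"
  define z where "z r = (\<Sum>a\<in>F. u a * zf a r)" for r
  define d where "d r = (\<Sum>a\<in>F. u a * df a r)" for r
  let ?N = "2*m+6"
  have R': "\<And>a. a \<in> F \<Longrightarrow> 0 \<le> Mf a \<and> Mf a \<le> 1 \<and>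
     (\<forall>r<?N. 0 \<le> zf a r \<and> zf a r \<le> 1 - Mf a \<and> 0 \<le> df a r \<and> df a r \<le> Mf a \<and> a r = zf a r + Mf a/2 - df a r) \<and>
     (\<forall>r\<ge>?N. a r = 0) \<and> (\<Sum>r<?N. zf a r) = (1 - Mf a) * real (m+1) \<and> (\<Sum>r<?N. df a r) = 2*Mf a"
    using R unfolding rep_def by blast
  have "0 \<le> M" unfolding M_def using Fu(4) R' by (auto intro!: sum_nonneg)
  moreover have "M \<le> 1"
  proof -
    have "M \<le> (\<Sum>a\<in>F. u a * 1)" unfolding M_def using Fu(4) R'
      by (intro sum_mono mult_left_mono) auto
    then show ?thesis using Fu(5) by simp
  qed
  moreover have "\<forall>r<?N. 0 \<le> z r \<and> z r \<le> 1 - M \<and> 0 \<le> d r \<and> d r \<le> M \<and> x r = z r + M/2 - d r"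
  proof (intro allI impI conjI)
    fix r assume r: "r < ?N"
    show "0 \<le> z r" unfolding z_def using Fu(4) R' r by (auto intro!: sum_nonneg)
    show "0 \<le> d r" unfolding d_def using Fu(4) R' r by (auto intro!: sum_nonneg)
    have "z r \<le> (\<Sum>a\<in>F. u a * (1 - Mf a))" unfolding z_def using Fu(4) R' r
      by (intro sum_mono mult_left_mono) auto
    also have "\<dots> = 1 - M" unfolding M_def using Fu(5) by (simp add: right_diff_distrib sum_subtractf)
    finally show "z r \<le> 1 - M" .
    show "d r \<le> M" unfolding d_def M_def using Fu(4) R' r
      by (intro sum_mono mult_left_mono) auto
    have "x r = (\<Sum>a\<in>F. u a * (zf a r + Mf a/2 - df a r))"
      using Fu(6) R' r by (auto intro!: sum.cong)
    also have "\<dots> = z r + M/2 - d r" unfolding z_def d_def M_def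
      by (simp add: ring_distribs sum.distrib sum_subtractf sum_divide_distrib)
    finally show "x r = z r + M/2 - d r" .
  qed
  moreover have "\<forall>r\<ge>?N. x r = 0"
  proof (intro allI impI)
    fix r :: nat assume "?N \<le> r"
    then show "x r = 0" using Fu(6) R' by (simp add: sum.neutral)
  qed
  moreover have "(\<Sum>r<?N. z r) = (1 - M) * real (m+1)"
  proof -
    have "(\<Sum>r<?N. z r) = (\<Sum>a\<in>F. u a * (\<Sum>r<?N. zf a r))"
      unfolding z_def by (subst sum.swap) (simp add: sum_distrib_left)
    also have "\<dots> = (\<Sum>a\<in>F. u a * ((1 - Mf a) * real (m+1)))" using R' by (auto intro!: sum.cong)
    also have "\<dots> = (\<Sum>a\<in>F. real (m+1) * u a - real (m+1) * (u a * Mf a))"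
      by (rule sum.cong) (auto simp: algebra_simps)
    also have "\<dots> = real (m+1) * sum u F - real (m+1) * M" unfolding M_def
      by (simp add: sum_subtractf sum_distrib_left)
    also have "\<dots> = (1 - M) * real (m+1)" using Fu(5) by (simp add: algebra_simps)
    finally show ?thesis .
  qed
  moreover have "(\<Sum>r<?N. d r) = 2 * M"
  proof -
    have "(\<Sum>r<?N. d r) = (\<Sum>a\<in>F. u a * (\<Sum>r<?N. df a r))"
      unfolding d_def by (subst sum.swap) (simp add: sum_distrib_left)
    also have "\<dots> = (\<Sum>a\<in>F. u a * (2 * Mf a))" using R' by (auto intro!: sum.cong)
    also have "\<dots> = 2 * M" unfolding M_def by (simp add: sum_distrib_left algebra_simps)
    finally show ?thesis .
  qed
  ultimately have "rep m x M z d" unfolding rep_def by blast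
  then show ?thesis by blast
qed

lemma rep_x:
  assumes "rep m x M z d"
  shows "\<forall>r\<ge>2*m+6. x r = 0" "(\<Sum>r<2*m+6. x r) = real (m+1)"
proof -
  show "\<forall>r\<ge>2*m+6. x r = 0" using assms unfolding rep_def by blast
  have "(\<Sum>r<2*m+6. x r) = (\<Sum>r<2*m+6. z r + M/2 - d r)"
    using assms unfolding rep_def by (auto intro!: sum.cong)
  also have "\<dots> = (1 - M) * real (m+1) + real (2*m+6) * M / 2 - 2*M"
    using assms unfolding rep_def by (simp add: sum.distrib sum_subtractf)
  also have "\<dots> = real (m+1)" by (simp add: algebra_simps)
  finally show "(\<Sum>r<2*m+6. x r) = real (m+1)" .
qed

definition Phi :: "nat \<Rightarrow> (nat \<Rightarrow> real) \<Rightarrow> real \<Rightarrow> bool" where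
  "Phi m x M \<longleftrightarrow> 0 \<le> M \<and> M \<le> 1 \<and>
     (\<forall>r<2*m+6. max 0 (x r - M/2) \<le> min (1 - M) (x r + M/2)) \<and>
     (\<Sum>r<2*m+6. max 0 (x r - M/2)) \<le> (1 - M) * real (m+1) \<and>
     (1 - M) * real (m+1) \<le> (\<Sum>r<2*m+6. min (1 - M) (x r + M/2))"

lemma rep_Phi:
  assumes "rep m x M z d"
  shows "Phi m x M"
proof -
  have R: "0 \<le> M" "M \<le> 1" "\<forall>r<2*m+6. 0 \<le> z r \<and> z r \<le> 1 - M \<and> 0 \<le> d r \<and> d r \<le> M \<and> x r = z r + M/2 - d r"
    "(\<Sum>r<2*m+6. z r) = (1 - M) * real (m+1)"
    using assms unfolding rep_def by blast+
  have a: "max 0 (x r - M/2) \<le> z r" "z r \<le> min (1 - M) (x r + M/2)" if "r < 2*m+6" for r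
  proof -
    have "0 \<le> z r" "z r \<le> 1 - M" "0 \<le> d r" "d r \<le> M" "x r = z r + M/2 - d r"
      using R(3) that by blast+
    then show "max 0 (x r - M/2) \<le> z r" "z r \<le> min (1 - M) (x r + M/2)" by auto
  qed
  have "(\<Sum>r<2*m+6. max 0 (x r - M/2)) \<le> (\<Sum>r<2*m+6. z r)" using a(1) by (intro sum_mono) auto
  moreover have "(\<Sum>r<2*m+6. z r) \<le> (\<Sum>r<2*m+6. min (1 - M) (x r + M/2))" using a(2) by (intro sum_mono) auto
  moreover have "\<forall>r<2*m+6. max 0 (x r - M/2) \<le> min (1 - M) (x r + M/2)"
    using a by (meson order_trans)
  ultimately show ?thesis unfolding Phi_def using R(1,2,4) by simp
qed

lemma Phi_rep:
  assumes P: "Phi m x M" and x0: "\<forall>r\<ge>2*m+6. x r = 0" and sx: "(\<Sum>r<2*m+6. x r) = real (m+1)"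
  shows "\<exists>z d. rep m x M z d"
proof -
  let ?N = "2*m+6"
  define lo where "lo r = max 0 (x r - M/2)" for r
  define hi where "hi r = min (1 - M) (x r + M/2)" for r
  define SL where "SL = (\<Sum>r<?N. lo r)"
  define SH where "SH = (\<Sum>r<?N. hi r)"
  define T where "T = (1 - M) * real (m+1)"
  have P': "0 \<le> M" "M \<le> 1" "\<forall>r<?N. lo r \<le> hi r" "SL \<le> T" "T \<le> SH"
    using P unfolding Phi_def lo_def hi_def SL_def SH_def T_def by auto
  define \<theta> where "\<theta> = (if SH = SL then 0 else (T - SL) / (SH - SL))"
  have th: "0 \<le> \<theta>" "\<theta> \<le> 1" using P' unfolding \<theta>_def by (auto simp: divide_simps)
  define z where "z r = lo r + \<theta> * (hi r - lo r)" for r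
  define d where "d r = z r - x r + M/2" for r
  have zb: "lo r \<le> z r \<and> z r \<le> hi r" if "r < ?N" for r
  proof -
    have "0 \<le> \<theta> * (hi r - lo r)" "\<theta> * (hi r - lo r) \<le> 1 * (hi r - lo r)"
      using th P' that by (auto intro: mult_left_le_one_le)
    then show ?thesis unfolding z_def by simp
  qed
  have "(\<Sum>r<?N. z r) = SL + \<theta> * (SH - SL)"
    unfolding z_def SL_def SH_def by (simp add: sum.distrib sum_subtractf right_diff_distrib sum_distrib_left)
  also have "\<dots> = T" using P' unfolding \<theta>_def by auto
  finally have sz: "(\<Sum>r<?N. z r) = T" .
  have "(\<Sum>r<?N. d r) = T - real (m+1) + real ?N * M / 2"
    unfolding d_def using sz sx by (simp add: sum.distrib sum_subtractf)
  also have "\<dots> = 2 * M" unfolding T_def by (simp add: algebra_simps)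
  finally have sd: "(\<Sum>r<?N. d r) = 2 * M" .
  have "\<forall>r<?N. 0 \<le> z r \<and> z r \<le> 1 - M \<and> 0 \<le> d r \<and> d r \<le> M \<and> x r = z r + M/2 - d r"
  proof (intro allI impI)
    fix r assume r: "r < ?N"
    show "0 \<le> z r \<and> z r \<le> 1 - M \<and> 0 \<le> d r \<and> d r \<le> M \<and> x r = z r + M/2 - d r"
      using zb[OF r] unfolding lo_def hi_def d_def by auto
  qed
  then have "rep m x M z d" unfolding rep_def using P' x0 sz sd T_def by auto
  then show ?thesis by blast
qed

lemma Phi_closed: "closed {M. Phi m x M}"
proof -
  have "{M. Phi m x M} = {M. 0 \<le> M} \<inter> {M. M \<le> 1} \<inter>
     (\<Inter>r\<in>{..<2*m+6}. {M. max 0 (x r - M/2) \<le> min (1 - M) (x r + M/2)}) \<inter>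
     {M. (\<Sum>r<2*m+6. max 0 (x r - M/2)) \<le> (1 - M) * real (m+1)} \<inter>
     {M. (1 - M) * real (m+1) \<le> (\<Sum>r<2*m+6. min (1 - M) (x r + M/2))}"
    unfolding Phi_def by auto
  also have "closed \<dots>"
    by (intro closed_Int closed_INT ballI closed_Collect_le continuous_intros) auto
  finally show ?thesis .
qed

lemma rep_min:
  assumes "rep m x M0 z0 d0"
  shows "\<exists>M z d. rep m x M z d \<and> (\<forall>M' z' d'. rep m x M' z' d' \<longrightarrow> M \<le> M')"
proof -
  define S where "S = {M. \<exists>z d. rep m x M z d}"
  have x: "\<forall>r\<ge>2*m+6. x r = 0" "(\<Sum>r<2*m+6. x r) = real (m+1)" using rep_x[OF assms] by auto
  have "S = {M. Phi m x M}" unfolding S_def using rep_Phi Phi_rep[OF _ x] by blast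
  then have cS: "closed S" using Phi_closed by simp
  have neS: "S \<noteq> {}" unfolding S_def using assms by blast
  have bS: "bdd_below S" unfolding S_def rep_def by (rule bdd_belowI[of _ 0]) auto
  have "Inf S \<in> S" by (rule closed_contains_Inf[OF neS bS cS])
  then obtain z d where "rep m x (Inf S) z d" unfolding S_def by blast
  moreover have "\<forall>M' z' d'. rep m x M' z' d' \<longrightarrow> Inf S \<le> M'"
    using bS unfolding S_def by (auto intro: cInf_lower)
  ultimately show ?thesis by blast
qed

lemma perm_exists:
  assumes "k \<le> N" "T \<subseteq> {0..<N}" "card T = k"
  shows "\<exists>\<sigma>. \<sigma> permutes {0..<N} \<and> \<sigma> ` {0..<k} = T"
proof -
  have fT: "finite T" using assms(2) finite_subset by blast
  obtain f where f: "bij_betw f {0..<k} T"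
    using finite_same_card_bij[of "{0..<k}" T] fT assms(3) by auto
  have "card ({0..<N} - T) = N - k" using assms(2,3) fT by (simp add: card_Diff_subset)
  then obtain g where g: "bij_betw g {k..<N} ({0..<N} - T)"
    using finite_same_card_bij[of "{k..<N}" "{0..<N} - T"] by auto
  define \<sigma> where "\<sigma> i = (if i < k then f i else if i < N then g i else i)" for i
  have 1: "bij_betw \<sigma> {0..<k} T" using f by (rule bij_betw_cong[THEN iffD1, rotated]) (auto simp: \<sigma>_def)
  have 2: "bij_betw \<sigma> {k..<N} ({0..<N} - T)" using g
    by (rule bij_betw_cong[THEN iffD1, rotated]) (auto simp: \<sigma>_def)
  have "bij_betw \<sigma> ({0..<k} \<union> {k..<N}) (T \<union> ({0..<N} - T))"
    by (rule bij_betw_combine[OF 1 2]) auto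
  moreover have "{0..<k} \<union> {k..<N} = {0..<N}" using assms(1) by auto
  moreover have "T \<union> ({0..<N} - T) = {0..<N}" using assms(2) by auto
  ultimately have "bij_betw \<sigma> {0..<N} {0..<N}" by simp
  then have "\<sigma> permutes {0..<N}" by (rule bij_imp_permutes) (use assms(1) in \<open>auto simp: \<sigma>_def\<close>)
  moreover have "\<sigma> ` {0..<k} = T" using 1 by (simp add: bij_betw_def)
  ultimately show ?thesis by blast
qed

lemma perm_facts:
  assumes "\<sigma> permutes {0..<N}"
  shows "\<And>k. k < N \<Longrightarrow> \<sigma> k < N" "\<And>k. N \<le> k \<Longrightarrow> \<sigma> k = k"
    "\<And>i j. \<sigma> i = \<sigma> j \<longleftrightarrow> i = j" "x = perm_act \<sigma> (\<lambda>k. x (\<sigma> k))"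
    "\<And>g. (\<Sum>i<N. g (\<sigma> i)) = (\<Sum>r<N. g r)"
proof -
  show "\<And>k. k < N \<Longrightarrow> \<sigma> k < N" using permutes_in_image[OF assms] by auto
  show "\<And>k. N \<le> k \<Longrightarrow> \<sigma> k = k" using permutes_not_in[OF assms] by auto
  show "\<And>i j. \<sigma> i = \<sigma> j \<longleftrightarrow> i = j" using permutes_inj[OF assms] by (auto dest: injD)
  show "x = perm_act \<sigma> (\<lambda>k. x (\<sigma> k))" unfolding perm_act_def
    using permutes_inverses(1)[OF assms] by simp
  fix g :: "nat \<Rightarrow> 'b::comm_monoid_add"
  have "(\<Sum>r\<in>{0..<N}. g r) = (\<Sum>i\<in>{0..<N}. (g \<circ> \<sigma>) i)" by (rule sum.permute[OF assms])
  then show "(\<Sum>i<N. g (\<sigma> i)) = (\<Sum>r<N. g r)" by (simp add: atLeast0LessThan)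
qed

lemma case_I:
  assumes R: "rep m x 0 z d"
  shows "x \<in> P_I m"
proof -
  have R': "\<forall>r<2*m+6. 0 \<le> z r \<and> z r \<le> 1 - 0 \<and> 0 \<le> d r \<and> d r \<le> 0 \<and> x r = z r + 0/2 - d r"
    using R unfolding rep_def by blast
  have x: "\<forall>r\<ge>2*m+6. x r = 0" "(\<Sum>r<2*m+6. x r) = real (m+1)" using rep_x[OF R] by auto
  have "x \<in> cvx_hull {v_vec S | S. S \<subseteq> {0..<2*m+6} \<and> card S = m+1}"
  proof (rule hyper)
    show "\<forall>r\<in>{0..<2*m+6}. 0 \<le> x r \<and> x r \<le> 1" using R' by auto
    show "\<forall>r. r \<notin> {0..<2*m+6} \<longrightarrow> x r = 0" using x by auto
    show "sum x {0..<2*m+6} = real (m+1)" using x by (simp add: atLeast0LessThan)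
  qed simp
  then show ?thesis unfolding P_I_def .
qed

lemma sum_w:
  assumes "finite A"
  shows "(\<Sum>i\<in>A. f i * w_vec N c i k) =
    (\<Sum>i\<in>A. f i) * ((if k < N then 1/2 else 0) - (if k = c then 1 else 0)) - (if k \<in> A then f k else 0)"
proof -
  have "(\<Sum>i\<in>A. f i * w_vec N c i k) =
     (\<Sum>i\<in>A. f i * ((if k < N then 1/2 else 0) - (if k = c then 1 else 0)) - (if i = k then f i else 0))"
    by (rule sum.cong) (auto simp: w_apply algebra_simps)
  also have "\<dots> = (\<Sum>i\<in>A. f i) * ((if k < N then 1/2 else 0) - (if k = c then 1 else 0)) - (if k \<in> A then f k else 0)"
    using assms by (simp add: sum_subtractf sum_distrib_right)
  finally show ?thesis .
qed

lemma case_II: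
  assumes R: "rep m x M z d" and c: "c < 2*m+6" "d c = M" "z c = 0"
  shows "x \<in> (\<Union>\<sigma>\<in>{\<sigma>. \<sigma> permutes {0..<2*m+6}}. perm_act \<sigma> ` P_II m)"
proof -
  let ?N = "2*m+6"
  obtain \<sigma> where \<sigma>: "\<sigma> permutes {0..<?N}" "\<sigma> ` {0..<1} = {c}"
    using perm_exists[of 1 ?N "{c}"] c by auto
  have s0: "\<sigma> 0 = c" using \<sigma>(2) by auto
  note pf = perm_facts[OF \<sigma>(1)]
  have R0: "0 \<le> M" "M \<le> 1" and R3: "\<forall>r<?N. 0 \<le> z r \<and> z r \<le> 1 - M \<and> 0 \<le> d r \<and> d r \<le> M \<and> x r = z r + M/2 - d r"
    and Rx: "\<forall>r\<ge>?N. x r = 0" and Rz: "(\<Sum>r<?N. z r) = (1 - M) * real (m+1)" and Rd: "(\<Sum>r<?N. d r) = 2*M"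
    using R unfolding rep_def by blast+
  define K where "K = 1 - M"
  have K0: "0 \<le> K" using R0 unfolding K_def by simp
  define h where "h k = (if k < ?N then z (\<sigma> k) / K else 0)" for k
  define G where "G = {v_vec S |S. S \<subseteq> {1..<?N} \<and> card S = m+1} \<union> {w_vec ?N 0 j |j. 1 \<le> j \<and> j < ?N}"
  have PII: "P_II m = cvx_hull G" unfolding P_II_def G_def ..
  define q where "q i = (if i = 0 then (if 0 < K then h else w_vec ?N 0 1) else w_vec ?N 0 i)" for i
  define cf where "cf i = (if i = 0 then K else d (\<sigma> i))" for i
  have split: "(\<Sum>i\<in>{0..<?N}. g i) = g 0 + (\<Sum>i\<in>{1..<?N}. g i)" for g :: "nat \<Rightarrow> real"
    by (subst sum.atLeast_Suc_lessThan) auto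
  have sd1: "(\<Sum>i\<in>{1..<?N}. d (\<sigma> i)) = M"
  proof -
    have "(\<Sum>i\<in>{0..<?N}. d (\<sigma> i)) = 2 * M" using pf(5)[of d] Rd by (simp add: atLeast0LessThan)
    then show ?thesis using split[of "\<lambda>i. d (\<sigma> i)"] s0 c by simp
  qed
  have hmem: "h \<in> cvx_hull {v_vec S |S. S \<subseteq> {1..<?N} \<and> card S = m+1}" if Kp: "0 < K"
  proof (rule hyper)
    show "\<forall>r\<in>{1..<?N}. 0 \<le> h r \<and> h r \<le> 1"
    proof
      fix r assume "r \<in> {1..<?N}"
      then have "\<sigma> r < ?N" using pf(1) by auto
      then have "0 \<le> z (\<sigma> r)" "z (\<sigma> r) \<le> K" using R3 unfolding K_def by auto
      then show "0 \<le> h r \<and> h r \<le> 1" using Kp \<open>r \<in> {1..<?N}\<close> unfolding h_def by auto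
    qed
    show "\<forall>r. r \<notin> {1..<?N} \<longrightarrow> h r = 0"
    proof (intro allI impI)
      fix r assume "r \<notin> {1..<?N}"
      then have "r = 0 \<or> \<not> r < ?N" by auto
      then show "h r = 0" using s0 c unfolding h_def by auto
    qed
    have "(\<Sum>i\<in>{0..<?N}. h i) = (\<Sum>i<?N. z (\<sigma> i) / K)" unfolding h_def
      by (simp add: atLeast0LessThan)
    also have "\<dots> = (\<Sum>r<?N. z r) / K" using pf(5)[of "\<lambda>r. z r / K"] by (simp add: sum_divide_distrib)
    also have "\<dots> = real (m+1)" using Rz Kp unfolding K_def by simp
    finally show "sum h {1..<?N} = real (m+1)" using split[of h] s0 c unfolding h_def by simp
  qed simp
  have Gw: "w_vec ?N 0 j \<in> G" if "1 \<le> j" "j < ?N" for j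
    unfolding G_def using that by blast
  have Gsub: "cvx_hull {v_vec S |S. S \<subseteq> {1..<?N} \<and> card S = m+1} \<subseteq> cvx_hull G"
    by (rule cvx_hull_mono) (unfold G_def, rule Un_upper1)
  have qmem: "\<forall>i\<in>{0..<?N}. q i \<in> cvx_hull G"
  proof
    fix i assume i: "i \<in> {0..<?N}"
    show "q i \<in> cvx_hull G"
    proof (cases "i = 0")
      case True
      show ?thesis
      proof (cases "0 < K")
        case True
        then have "q i = h" using \<open>i = 0\<close> unfolding q_def by simp
        then show ?thesis using hmem[OF True] Gsub by blast
      next
        case False
        then have "q i = w_vec ?N 0 1" using \<open>i = 0\<close> unfolding q_def by simp
        then show ?thesis using Gw[of 1] cvx_hull_inc by simp
      qed
    next
      case False
      then have "q i = w_vec ?N 0 i" unfolding q_def by simp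
      then show ?thesis using Gw[of i] cvx_hull_inc False i by simp
    qed
  qed
  have cfnn: "\<forall>i\<in>{0..<?N}. 0 \<le> cf i" using K0 R3 pf(1) unfolding cf_def by auto
  have cfs: "sum cf {0..<?N} = 1"
  proof -
    have "sum cf {0..<?N} = K + (\<Sum>i\<in>{1..<?N}. d (\<sigma> i))" using split[of cf] unfolding cf_def by simp
    then show ?thesis using sd1 unfolding K_def by simp
  qed
  have main: "(\<lambda>k. x (\<sigma> k)) = (\<lambda>k. \<Sum>i\<in>{0..<?N}. cf i * q i k)"
  proof
    fix k
    have "(\<Sum>i\<in>{0..<?N}. cf i * q i k) = cf 0 * q 0 k + (\<Sum>i\<in>{1..<?N}. d (\<sigma> i) * w_vec ?N 0 i k)"
      using split[of "\<lambda>i. cf i * q i k"] unfolding cf_def q_def by simp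
    also have "(\<Sum>i\<in>{1..<?N}. d (\<sigma> i) * w_vec ?N 0 i k) =
       M * ((if k < ?N then 1/2 else 0) - (if k = 0 then 1 else 0)) - (if k \<in> {1..<?N} then d (\<sigma> k) else 0)"
      using sum_w[of "{1..<?N}" "\<lambda>i. d (\<sigma> i)" ?N 0 k] sd1 by simp
    also have "cf 0 * q 0 k = (if k < ?N then z (\<sigma> k) else 0)"
    proof (cases "0 < K")
      case True then show ?thesis unfolding cf_def q_def h_def by simp
    next
      case False
      then have "K = 0" using K0 by simp
      moreover have "k < ?N \<Longrightarrow> z (\<sigma> k) = 0" using R3 pf(1) \<open>K = 0\<close> unfolding K_def
        by (metis dual_order.antisym)
      ultimately show ?thesis unfolding cf_def by simp
    qed
    finally have e: "(\<Sum>i\<in>{0..<?N}. cf i * q i k) = (if k < ?N then z (\<sigma> k) else 0) +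
       (M * ((if k < ?N then 1/2 else 0) - (if k = 0 then 1 else 0)) - (if k \<in> {1..<?N} then d (\<sigma> k) else 0))" .
    show "x (\<sigma> k) = (\<Sum>i\<in>{0..<?N}. cf i * q i k)"
    proof (cases "k < ?N")
      case True
      then have "x (\<sigma> k) = z (\<sigma> k) + M/2 - d (\<sigma> k)" using R3 pf(1) by auto
      show ?thesis
      proof (cases "k = 0")
        case True
        then show ?thesis unfolding e using \<open>x (\<sigma> k) = z (\<sigma> k) + M/2 - d (\<sigma> k)\<close> s0 c by simp
      next
        case False
        then show ?thesis unfolding e using \<open>x (\<sigma> k) = z (\<sigma> k) + M/2 - d (\<sigma> k)\<close> \<open>k < ?N\<close> by simp
      qed
    next
      case False
      then show ?thesis unfolding e using pf(2) Rx by auto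
    qed
  qed
  have "(\<lambda>k. x (\<sigma> k)) \<in> P_II m" unfolding PII main
    by (rule cvx_sum[OF _ _ cfnn cfs qmem]) auto
  then have "x \<in> perm_act \<sigma> ` P_II m" using pf(4)[of x] by blast
  then show ?thesis using \<sigma>(1) by blast
qed

lemma split3: "(\<Sum>i\<in>{0..<2*m+6}. g i) = g 0 + g 1 + g 2 + (\<Sum>i\<in>{3..<2*m+6}. g i)" for g :: "nat \<Rightarrow> real"
proof -
  have "(\<Sum>i\<in>{0..<2*m+6}. g i) = (\<Sum>i\<in>{0..<3}. g i) + (\<Sum>i\<in>{3..<2*m+6}. g i)"
    by (rule sum.atLeastLessThan_concat[symmetric]) auto
  moreover have "(\<Sum>i\<in>{0..<3}. g i) = g 0 + g 1 + g 2" by (simp add: numeral_3_eq_3 numeral_2_eq_2)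
  ultimately show ?thesis by simp
qed

lemma case_III:
  assumes R: "rep m x M z d" and T: "card {r. r < 2*m+6 \<and> 0 < d r} = 3"
    and zT: "\<forall>r<2*m+6. 0 < d r \<longrightarrow> z r = 0"
  shows "x \<in> (\<Union>\<sigma>\<in>{\<sigma>. \<sigma> permutes {0..<2*m+6}}. perm_act \<sigma> ` P_III m)"
proof -
  let ?N = "2*m+6"
  let ?T = "{r. r < ?N \<and> 0 < d r}"
  obtain \<sigma> where \<sigma>: "\<sigma> permutes {0..<?N}" "\<sigma> ` {0..<3} = ?T"
  proof -
    have "?T \<subseteq> {0..<?N}" by auto
    then show ?thesis using perm_exists[of 3 ?N ?T] T that by auto
  qed
  note pf = perm_facts[OF \<sigma>(1)]
  have R0: "0 \<le> M" "M \<le> 1" and R3: "\<forall>r<?N. 0 \<le> z r \<and> z r \<le> 1 - M \<and> 0 \<le> d r \<and> d r \<le> M \<and> x r = z r + M/2 - d r"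
    and Rx: "\<forall>r\<ge>?N. x r = 0" and Rz: "(\<Sum>r<?N. z r) = (1 - M) * real (m+1)" and Rd: "(\<Sum>r<?N. d r) = 2*M"
    using R unfolding rep_def by blast+
  have lo3: "0 < d (\<sigma> i) \<and> z (\<sigma> i) = 0 \<and> \<sigma> i < ?N" if "i < 3" for i
  proof -
    have "\<sigma> i \<in> \<sigma> ` {0..<3}" using that by simp
    then have "\<sigma> i \<in> ?T" unfolding \<sigma>(2) .
    then have "\<sigma> i < ?N" "0 < d (\<sigma> i)" by simp_all
    then show ?thesis using zT by simp
  qed
  have hi3: "d (\<sigma> i) = 0" if "3 \<le> i" "i < ?N" for i
  proof -
    have "\<sigma> i \<notin> ?T"
    proof
      assume "\<sigma> i \<in> ?T"
      then have "\<sigma> i \<in> \<sigma> ` {0..<3}" unfolding \<sigma>(2) .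
      then obtain j where "j < 3" "\<sigma> i = \<sigma> j" by auto
      then show False using pf(3)[of i j] that by simp
    qed
    moreover have "\<sigma> i < ?N" using pf(1) that by simp
    moreover have "0 \<le> d (\<sigma> i)" using R3 \<open>\<sigma> i < ?N\<close> by simp
    ultimately show ?thesis by simp
  qed
  note split = split3[where m=m]
  have S3: "d (\<sigma> 0) + d (\<sigma> 1) + d (\<sigma> 2) = 2 * M"
  proof -
    have "(\<Sum>i\<in>{0..<?N}. d (\<sigma> i)) = 2 * M" using pf(5)[of d] Rd by (simp add: atLeast0LessThan)
    moreover have "(\<Sum>i\<in>{3..<?N}. d (\<sigma> i)) = 0" using hi3 by (intro sum.neutral) auto
    ultimately show ?thesis using split[of "\<lambda>i. d (\<sigma> i)"] by simp
  qed
  define K where "K = 1 - M"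
  have K0: "0 \<le> K" using R0 unfolding K_def by simp
  define h where "h k = (if k < ?N then z (\<sigma> k) / K else 0)" for k
  define G where "G = {v_vec S |S. S \<subseteq> {3..<?N} \<and> card S = m+1} \<union> {w_vec ?N i j |i j. i < j \<and> j \<le> 2}"
  have PIII: "P_III m = cvx_hull G" unfolding P_III_def G_def ..
  have hmem: "h \<in> cvx_hull {v_vec S |S. S \<subseteq> {3..<?N} \<and> card S = m+1}" if Kp: "0 < K"
  proof (rule hyper)
    show "\<forall>r\<in>{3..<?N}. 0 \<le> h r \<and> h r \<le> 1"
    proof
      fix r assume "r \<in> {3..<?N}"
      then have "\<sigma> r < ?N" using pf(1) by auto
      then have "0 \<le> z (\<sigma> r)" "z (\<sigma> r) \<le> K" using R3 unfolding K_def by auto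
      then show "0 \<le> h r \<and> h r \<le> 1" using Kp \<open>r \<in> {3..<?N}\<close> unfolding h_def by auto
    qed
    show "\<forall>r. r \<notin> {3..<?N} \<longrightarrow> h r = 0"
    proof (intro allI impI)
      fix r assume "r \<notin> {3..<?N}"
      then have "r < 3 \<or> \<not> r < ?N" by auto
      then show "h r = 0" using lo3 unfolding h_def by auto
    qed
    have "(\<Sum>i\<in>{0..<?N}. h i) = (\<Sum>i<?N. z (\<sigma> i) / K)" unfolding h_def
      by (simp add: atLeast0LessThan)
    also have "\<dots> = (\<Sum>r<?N. z r) / K" using pf(5)[of "\<lambda>r. z r / K"] by (simp add: sum_divide_distrib)
    also have "\<dots> = real (m+1)" using Rz Kp unfolding K_def by simp
    moreover have "h 0 = 0" "h 1 = 0" "h 2 = 0" using lo3[of 0] lo3[of 1] lo3[of 2] unfolding h_def by auto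
    ultimately show "sum h {3..<?N} = real (m+1)" using split[of h] by simp
  qed simp
  define q where "q i = (if i = 0 then (if 0 < K then h else w_vec ?N 0 1) else if i = 1 then w_vec ?N 0 1
     else if i = 2 then w_vec ?N 0 2 else w_vec ?N 1 2)" for i :: nat
  define cf where "cf i = (if i = 0 then K else if i = 1 then M - d (\<sigma> 2) else if i = 2 then M - d (\<sigma> 1)
     else M - d (\<sigma> 0))" for i :: nat
  have Gw: "w_vec ?N i j \<in> G" if "i < j" "j \<le> 2" for i j
    unfolding G_def using that by blast
  have Gsub: "cvx_hull {v_vec S |S. S \<subseteq> {3..<?N} \<and> card S = m+1} \<subseteq> cvx_hull G"
    by (rule cvx_hull_mono) (unfold G_def, rule Un_upper1)
  have qmem: "\<forall>i\<in>{0,1,2,3}. q i \<in> cvx_hull G"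
  proof -
    have "q 0 \<in> cvx_hull G"
    proof (cases "0 < K")
      case True
      then have "q 0 = h" unfolding q_def by simp
      then show ?thesis using hmem[OF True] Gsub by blast
    next
      case False
      then have "q 0 = w_vec ?N 0 1" unfolding q_def by simp
      then show ?thesis using Gw[of 0 1] cvx_hull_inc by simp
    qed
    moreover have "q 1 \<in> cvx_hull G" unfolding q_def using Gw[of 0 1] cvx_hull_inc by simp
    moreover have "q 2 \<in> cvx_hull G" unfolding q_def using Gw[of 0 2] cvx_hull_inc by simp
    moreover have "q 3 \<in> cvx_hull G" unfolding q_def using Gw[of 1 2] cvx_hull_inc by simp
    ultimately show ?thesis by simp
  qed
  have cfnn: "\<forall>i\<in>{0,1,2,3}. 0 \<le> cf i" using K0 R3 lo3[of 0] lo3[of 1] lo3[of 2] unfolding cf_def by auto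
  have cfs: "sum cf {0,1,2,3} = 1" unfolding cf_def K_def using S3 by simp
  have main: "(\<lambda>k. x (\<sigma> k)) = (\<lambda>k. \<Sum>i\<in>{0,1,2,3}. cf i * q i k)"
  proof
    fix k
    have "(\<Sum>i\<in>{0,1,2,3::nat}. cf i * q i k) = cf 0 * q 0 k + (M - d (\<sigma> 2)) * w_vec ?N 0 1 k
       + (M - d (\<sigma> 1)) * w_vec ?N 0 2 k + (M - d (\<sigma> 0)) * w_vec ?N 1 2 k"
      unfolding cf_def q_def by simp
    also have "cf 0 * q 0 k = (if k < ?N then z (\<sigma> k) else 0)"
    proof (cases "0 < K")
      case True then show ?thesis unfolding cf_def q_def h_def by simp
    next
      case False
      then have "K = 0" using K0 by simp
      moreover have "k < ?N \<Longrightarrow> z (\<sigma> k) = 0" using R3 pf(1) \<open>K = 0\<close> unfolding K_def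
        by (metis dual_order.antisym)
      ultimately show ?thesis unfolding cf_def by simp
    qed
    finally have e: "(\<Sum>i\<in>{0,1,2,3::nat}. cf i * q i k) = (if k < ?N then z (\<sigma> k) else 0) +
        (M - d (\<sigma> 2)) * w_vec ?N 0 1 k + (M - d (\<sigma> 1)) * w_vec ?N 0 2 k + (M - d (\<sigma> 0)) * w_vec ?N 1 2 k" .
    show "x (\<sigma> k) = (\<Sum>i\<in>{0,1,2,3}. cf i * q i k)"
    proof (cases "k < ?N")
      case True
      then have xk: "x (\<sigma> k) = z (\<sigma> k) + M/2 - d (\<sigma> k)" using R3 pf(1) by auto
      consider "k = 0" | "k = 1" | "k = 2" | "3 \<le> k" by linarith
      then show ?thesis
      proof cases
        case 1 then show ?thesis unfolding e using xk True S3 lo3[of 0] by (simp add: w_apply; simp add: field_simps; linarith)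
      next
        case 2 then show ?thesis unfolding e using xk True S3 lo3[of 1] by (simp add: w_apply; simp add: field_simps; linarith)
      next
        case 3 then show ?thesis unfolding e using xk True S3 lo3[of 2] by (simp add: w_apply; simp add: field_simps; linarith)
      next
        case 4 then show ?thesis unfolding e using xk True S3 hi3[of k] by (simp add: w_apply; simp add: field_simps; linarith)
      qed
    next
      case False
      then show ?thesis unfolding e using pf(2) Rx by (auto simp: w_apply)
    qed
  qed
  have "(\<lambda>k. x (\<sigma> k)) \<in> P_III m" unfolding PIII main
    by (rule cvx_sum[OF _ _ cfnn cfs qmem]) auto
  then have "x \<in> perm_act \<sigma> ` P_III m" using pf(4)[of x] by blast
  then show ?thesis using \<sigma>(1) by blast
qed

lemma reduce:
  assumes R: "rep m x M z d" and M0: "0 < M"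
    and nA: "\<forall>c<2*m+6. d c = M \<longrightarrow> z c \<noteq> 0"
    and nB: "\<not> (card {r. r < 2*m+6 \<and> 0 < d r} \<le> 3 \<and> (\<forall>r<2*m+6. 0 < d r \<longrightarrow> z r = 0 \<and> d r < M))"
  shows "\<exists>\<delta>>0. \<exists>z' d'. rep m x (M - \<delta>) z' d'"
proof -
  let ?N = "2*m+6"
  have R0: "0 \<le> M" "M \<le> 1" and R3: "\<forall>r<?N. 0 \<le> z r \<and> z r \<le> 1 - M \<and> 0 \<le> d r \<and> d r \<le> M \<and> x r = z r + M/2 - d r"
    and Rx: "\<forall>r\<ge>?N. x r = 0" and Rz: "(\<Sum>r<?N. z r) = (1 - M) * real (m+1)" and Rd: "(\<Sum>r<?N. d r) = 2*M"
    using R unfolding rep_def by blast+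
  define T1 where "T1 = {r. r < ?N \<and> d r = 0}"
  define T2 where "T2 = {r. r < ?N \<and> z r = 0 \<and> 0 < d r \<and> d r < M}"
  define T3 where "T3 = {r. r < ?N \<and> 0 < z r \<and> 0 < d r \<and> d r < M}"
  define T4 where "T4 = {r. r < ?N \<and> d r = M}"
  have Tsub: "T1 \<subseteq> {..<?N}" "T2 \<subseteq> {..<?N}" "T3 \<subseteq> {..<?N}" "T4 \<subseteq> {..<?N}"
    unfolding T1_def T2_def T3_def T4_def by auto
  define ind where "ind X r = (if r \<in> X then 1 else (0::real))" for X :: "nat set" and r :: nat
  have cardind: "(\<Sum>r<?N. ind X r) = real (card X)" if "X \<subseteq> {..<?N}" for X
    unfolding ind_def using sum_restrict[OF finite_lessThan that, of "\<lambda>_. 1::real"] by simp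
  have cls: "(r \<in> T1 \<and> r \<notin> T2 \<and> r \<notin> T3 \<and> r \<notin> T4) \<or> (r \<notin> T1 \<and> r \<in> T2 \<and> r \<notin> T3 \<and> r \<notin> T4) \<or>
             (r \<notin> T1 \<and> r \<notin> T2 \<and> r \<in> T3 \<and> r \<notin> T4) \<or> (r \<notin> T1 \<and> r \<notin> T2 \<and> r \<notin> T3 \<and> r \<in> T4)"
    if r: "r < ?N" for r
  proof -
    have "0 \<le> z r" "0 \<le> d r" "d r \<le> M" using R3 r by auto
    then show ?thesis unfolding T1_def T2_def T3_def T4_def using r M0 by auto
  qed
  have part: "ind T1 r + ind T2 r + ind T3 r + ind T4 r = 1" if "r < ?N" for r
    using cls[OF that] unfolding ind_def by auto
  define n1 where "n1 = card T1"
  define n2 where "n2 = card T2"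
  define n3 where "n3 = card T3"
  define n4 where "n4 = card T4"
  have ncount: "real n1 + real n2 + real n3 + real n4 = real ?N"
  proof -
    have "(\<Sum>r<?N. ind T1 r + ind T2 r + ind T3 r + ind T4 r) = (\<Sum>r<?N. (1::real))"
      using part by (intro sum.cong) auto
    then show ?thesis using cardind[OF Tsub(1)] cardind[OF Tsub(2)] cardind[OF Tsub(3)] cardind[OF Tsub(4)]
      unfolding n1_def n2_def n3_def n4_def by (simp add: sum.distrib)
  qed
  define D23 where "D23 = (\<Sum>r<?N. (ind T2 r + ind T3 r) * d r)"
  have dsplit: "d r = (ind T2 r + ind T3 r) * d r + ind T4 r * M" if "r < ?N" for r
    using cls[OF that] unfolding ind_def T1_def T4_def by auto
  have Dsum: "2 * M = D23 + real n4 * M"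
  proof -
    have "(\<Sum>r<?N. d r) = (\<Sum>r<?N. (ind T2 r + ind T3 r) * d r + ind T4 r * M)"
      using dsplit by (intro sum.cong) auto
    also have "\<dots> = D23 + real n4 * M" unfolding D23_def n4_def
      using cardind[OF Tsub(4)] by (simp add: sum.distrib sum_distrib_right[symmetric])
    finally show ?thesis using Rd by simp
  qed
  have D23nn: "0 \<le> D23" unfolding D23_def using R3 by (intro sum_nonneg) (auto simp: ind_def)
  have D23le: "D23 \<le> (real n2 + real n3) * M"
  proof -
    have "D23 \<le> (\<Sum>r<?N. (ind T2 r + ind T3 r) * M)" unfolding D23_def using R3
      by (intro sum_mono mult_left_mono) (auto simp: ind_def)
    also have "\<dots> = (real n2 + real n3) * M"
      using cardind[OF Tsub(2)] cardind[OF Tsub(3)] unfolding n2_def n3_def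
      by (simp add: sum.distrib sum_distrib_right[symmetric])
    finally show ?thesis .
  qed
  have D23lt: "D23 < (real n2 + real n3) * M" if "0 < n2 + n3"
  proof -
    have "T2 \<union> T3 \<noteq> {}" using that unfolding n2_def n3_def by auto
    then obtain r0 where r0: "r0 \<in> T2 \<union> T3" by blast
    have "D23 < (\<Sum>r<?N. (ind T2 r + ind T3 r) * M)" unfolding D23_def
    proof (rule sum_strict_mono_ex1)
      show "\<forall>r\<in>{..<?N}. (ind T2 r + ind T3 r) * d r \<le> (ind T2 r + ind T3 r) * M"
        using R3 by (auto simp: ind_def)
      have "r0 < ?N" "ind T2 r0 + ind T3 r0 = 1" "d r0 < M"
        using r0 cls unfolding T2_def T3_def ind_def by auto
      then show "\<exists>r\<in>{..<?N}. (ind T2 r + ind T3 r) * d r < (ind T2 r + ind T3 r) * M"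
        by (intro bexI[of _ r0]) auto
    qed simp
    also have "\<dots> = (real n2 + real n3) * M"
      using cardind[OF Tsub(2)] cardind[OF Tsub(3)] unfolding n2_def n3_def
      by (simp add: sum.distrib sum_distrib_right[symmetric])
    finally show ?thesis .
  qed
  have n4le: "n4 \<le> 2"
  proof -
    have "real n4 * M \<le> 2 * M" using Dsum D23nn by linarith
    then have "real n4 \<le> 2" using M0 by simp
    then show ?thesis by simp
  qed
  have countL: "4 \<le> n2 + 3 * n3 + 2 * n4"
  proof (cases "n2 + n3 = 0")
    case True
    then have "n2 = 0" "n3 = 0" by auto
    then have "D23 \<le> 0" using D23le by simp
    then have "real n4 * M = 2 * M" using Dsum D23nn by linarith
    then have "n4 = 2" using M0 by simp
    then show ?thesis by simp
  next
    case False
    then have "2 * M - real n4 * M < (real n2 + real n3) * M" using D23lt Dsum by simp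
    then have "2 * M < (real n2 + real n3 + real n4) * M" by (simp add: algebra_simps)
    then have "2 < real n2 + real n3 + real n4" using M0 by (simp add: mult_less_cancel_right)
    then have "real 2 < real (n2 + n3 + n4)" by simp
    then have "2 < n2 + n3 + n4" by (simp only: of_nat_less_iff)
    then have c3: "3 \<le> n2 + n3 + n4" by simp
    show ?thesis
    proof (cases "n3 = 0 \<and> n4 = 0")
      case False then show ?thesis using c3 by auto
    next
      case True
      have fin: "finite T3" "finite T4" using Tsub finite_subset by blast+
      have e: "T3 = {}" "T4 = {}" using True fin unfolding n3_def n4_def by auto
      have all: "\<forall>r<?N. 0 < d r \<longrightarrow> z r = 0 \<and> d r < M"
      proof (intro allI impI)
        fix r assume r: "r < ?N" "0 < d r"
        have "r \<notin> T3" "r \<notin> T4" using e by auto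
        moreover have "0 \<le> z r" "d r \<le> M" using R3 r by auto
        ultimately show "z r = 0 \<and> d r < M" using r unfolding T3_def T4_def by auto
      qed
      have "{r. r < ?N \<and> 0 < d r} = T2" using all unfolding T2_def by auto
      then have "\<not> n2 \<le> 3" using nB all unfolding n2_def by auto
      then show ?thesis by simp
    qed
  qed
  define lo where "lo r = ind T1 r / 2 - ind T4 r / 2 - ind T3 r" for r
  define hi where "hi r = ind T1 r / 2 - ind T4 r / 2 + ind T2 r + ind T3 r" for r
  define SL where "SL = (\<Sum>r<?N. lo r)"
  define SH where "SH = (\<Sum>r<?N. hi r)"
  have SLv: "SL = real n1 / 2 - real n4 / 2 - real n3"
    unfolding SL_def lo_def n1_def n3_def n4_def
    using cardind[OF Tsub(1)] cardind[OF Tsub(3)] cardind[OF Tsub(4)]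
    by (simp add: sum_subtractf sum_divide_distrib[symmetric])
  have SHv: "SH = real n1 / 2 - real n4 / 2 + real n2 + real n3"
    unfolding SH_def hi_def n1_def n2_def n3_def n4_def
    using cardind[OF Tsub(1)] cardind[OF Tsub(2)] cardind[OF Tsub(3)] cardind[OF Tsub(4)]
    by (simp add: sum.distrib sum_subtractf sum_divide_distrib[symmetric])
  have L: "SL \<le> real (m+1)"
  proof -
    have "4 \<le> real n2 + 3 * real n3 + 2 * real n4" using countL by linarith
    then show ?thesis using SLv ncount by simp
  qed
  have U: "real (m+1) \<le> SH"
  proof -
    have "real n4 \<le> 2" using n4le by simp
    then show ?thesis using SHv ncount by simp
  qed
  have lohi: "lo r \<le> hi r" for r unfolding lo_def hi_def ind_def by auto
  define \<theta> where "\<theta> = (if SH = SL then 0 else (real (m+1) - SL) / (SH - SL))"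
  have th: "0 \<le> \<theta>" "\<theta> \<le> 1" using L U unfolding \<theta>_def by (auto simp: divide_simps)
  define a where "a r = lo r + \<theta> * (hi r - lo r)" for r
  have ab: "lo r \<le> a r \<and> a r \<le> hi r" for r
  proof -
    have "0 \<le> \<theta> * (hi r - lo r)" "\<theta> * (hi r - lo r) \<le> hi r - lo r"
      using th lohi[of r] by (auto intro: mult_left_le_one_le)
    then show ?thesis unfolding a_def by simp
  qed
  have sa: "(\<Sum>r<?N. a r) = real (m+1)"
  proof -
    have "(\<Sum>r<?N. a r) = SL + \<theta> * (SH - SL)"
      unfolding a_def SL_def SH_def by (simp add: sum.distrib sum_subtractf right_diff_distrib sum_distrib_left)
    then show ?thesis using L U unfolding \<theta>_def by auto
  qed
  define Q where "Q = insert M ((z ` {r. r < ?N \<and> 0 < z r}) \<union> (d ` {r. r < ?N \<and> 0 < d r})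
      \<union> ((\<lambda>r. M - d r) ` {r. r < ?N \<and> d r < M}))"
  have finC: "finite {r. r < ?N \<and> P r}" for P by (rule finite_subset[of _ "{..<?N}"]) auto
  have fQ: "finite Q" unfolding Q_def by (intro finite_insert[THEN iffD2] finite_UnI finite_imageI finC)
  have Qpos: "\<forall>q\<in>Q. 0 < q" unfolding Q_def using M0 by auto
  have Qne: "Q \<noteq> {}" unfolding Q_def by simp
  have MQ: "M \<in> Q" unfolding Q_def by simp
  have zQ: "z r \<in> Q" if "r < ?N" "0 < z r" for r
  proof -
    have "z r \<in> z ` {r. r < ?N \<and> 0 < z r}" using that by (intro imageI) simp
    then show ?thesis unfolding Q_def by blast
  qed
  have dQ: "d r \<in> Q" if "r < ?N" "0 < d r" for r
  proof -
    have "d r \<in> d ` {r. r < ?N \<and> 0 < d r}" using that by (intro imageI) simp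
    then show ?thesis unfolding Q_def by blast
  qed
  have mdQ: "M - d r \<in> Q" if "r < ?N" "d r < M" for r
  proof -
    have "M - d r \<in> (\<lambda>r. M - d r) ` {r. r < ?N \<and> d r < M}" using that by (intro imageI) simp
    then show ?thesis unfolding Q_def by blast
  qed
  define \<delta> where "\<delta> = Min Q / 2"
  have "Min Q \<in> Q" by (rule Min_in[OF fQ Qne])
  then have dpos: "0 < \<delta>" unfolding \<delta>_def using Qpos by auto
  have dM: "2 * \<delta> \<le> M" unfolding \<delta>_def using Min_le[OF fQ MQ] by simp
  have dz: "2 * \<delta> \<le> z r" if "r < ?N" "0 < z r" for r
    unfolding \<delta>_def using Min_le[OF fQ zQ[OF that]] by simp
  have dd: "2 * \<delta> \<le> d r" if "r < ?N" "0 < d r" for r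
    unfolding \<delta>_def using Min_le[OF fQ dQ[OF that]] by simp
  have dMd: "2 * \<delta> \<le> M - d r" if "r < ?N" "d r < M" for r
    unfolding \<delta>_def using Min_le[OF fQ mdQ[OF that]] by simp
  define z' where "z' r = z r + \<delta> * a r" for r
  define d' where "d' r = d r + \<delta> * a r - \<delta> / 2" for r
  have coord: "0 \<le> z' r \<and> z' r \<le> 1 - (M - \<delta>) \<and> 0 \<le> d' r \<and> d' r \<le> M - \<delta> \<and> x r = z' r + (M - \<delta>)/2 - d' r"
    if r: "r < ?N" for r
  proof -
    have Rr: "0 \<le> z r" "z r \<le> 1 - M" "0 \<le> d r" "d r \<le> M" "x r = z r + M/2 - d r" using R3 r by auto
    have da: "\<delta> * lo r \<le> \<delta> * a r" "\<delta> * a r \<le> \<delta> * hi r" using ab[of r] dpos by (auto intro: mult_left_mono)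
    have eq: "x r = z' r + (M - \<delta>)/2 - d' r" unfolding z'_def d'_def using Rr(5) by (simp add: field_simps)
    have fin: "0 \<le> z r + \<delta> * a r \<and> z r + \<delta> * a r \<le> 1 - (M - \<delta>) \<and> 0 \<le> d r + \<delta> * a r - \<delta>/2 \<and>
        d r + \<delta> * a r - \<delta>/2 \<le> M - \<delta>"
    proof -
      from cls[OF r] show ?thesis
      proof (elim disjE conjE)
        assume "r \<in> T1" "r \<notin> T2" "r \<notin> T3" "r \<notin> T4"
        then have "lo r = 1/2" "hi r = 1/2" "d r = 0" unfolding lo_def hi_def ind_def T1_def by auto
        then have "a r = 1/2" using ab[of r] by linarith
        then have "\<delta> * a r = \<delta> / 2" by simp
        then show ?thesis using Rr dpos dM \<open>d r = 0\<close> by - (intro conjI; linarith)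
      next
        assume "r \<notin> T1" "r \<in> T2" "r \<notin> T3" "r \<notin> T4"
        then have "lo r = 0" "hi r = 1" "z r = 0" "0 < d r" "d r < M"
          unfolding lo_def hi_def ind_def T2_def by auto
        moreover have "2 * \<delta> \<le> d r" "2 * \<delta> \<le> M - d r" using dd dMd r \<open>0 < d r\<close> \<open>d r < M\<close> by auto
        moreover have "0 \<le> \<delta> * a r" "\<delta> * a r \<le> \<delta>" using da \<open>lo r = 0\<close> \<open>hi r = 1\<close> by simp_all
        ultimately show ?thesis using Rr dpos dM by - (intro conjI; linarith)
      next
        assume "r \<notin> T1" "r \<notin> T2" "r \<in> T3" "r \<notin> T4"
        then have "lo r = -1" "hi r = 1" "0 < z r" "0 < d r" "d r < M"
          unfolding lo_def hi_def ind_def T3_def by auto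
        moreover have "2 * \<delta> \<le> d r" "2 * \<delta> \<le> M - d r" "2 * \<delta> \<le> z r"
          using dd dMd dz r \<open>0 < d r\<close> \<open>d r < M\<close> \<open>0 < z r\<close> by auto
        moreover have "- \<delta> \<le> \<delta> * a r" "\<delta> * a r \<le> \<delta>" using da \<open>lo r = -1\<close> \<open>hi r = 1\<close> by simp_all
        ultimately show ?thesis using Rr dpos dM by - (intro conjI; linarith)
      next
        assume "r \<notin> T1" "r \<notin> T2" "r \<notin> T3" "r \<in> T4"
        then have "lo r = -1/2" "hi r = -1/2" "d r = M" unfolding lo_def hi_def ind_def T1_def T4_def by auto
        moreover have "0 < z r" using nA r \<open>d r = M\<close> Rr(1) by auto
        moreover have "2 * \<delta> \<le> z r" using dz r \<open>0 < z r\<close> by auto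
        moreover have "a r = -1/2" using ab[of r] \<open>lo r = -1/2\<close> \<open>hi r = -1/2\<close> by linarith
        then have "\<delta> * a r = - \<delta> / 2" by simp
        ultimately show ?thesis using Rr dpos dM by - (intro conjI; linarith)
      qed
    qed
    show ?thesis using fin eq unfolding z'_def d'_def by blast
  qed
  have sz': "(\<Sum>r<?N. z' r) = (1 - (M - \<delta>)) * real (m+1)"
  proof -
    have "(\<Sum>r<?N. z' r) = (\<Sum>r<?N. z r) + \<delta> * (\<Sum>r<?N. a r)"
      unfolding z'_def by (simp add: sum.distrib sum_distrib_left)
    then show ?thesis using Rz sa by (simp add: algebra_simps)
  qed
  have sd': "(\<Sum>r<?N. d' r) = 2 * (M - \<delta>)"
  proof -
    have "(\<Sum>r<?N. d' r) = (\<Sum>r<?N. d r) + \<delta> * (\<Sum>r<?N. a r) - real ?N * (\<delta> / 2)"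
      unfolding d'_def by (simp add: sum.distrib sum_subtractf sum_distrib_left)
    then show ?thesis using Rd sa by (simp add: algebra_simps)
  qed
  have "rep m x (M - \<delta>) z' d'" unfolding rep_def
    using coord Rx sz' sd' dM R0 M0 dpos by auto
  then show ?thesis using dpos by blast
qed

theorem proposition5p6:
  fixes m :: nat
  shows "P_full m = P_I m
     \<union> (\<Union>\<sigma>\<in>{\<sigma>. \<sigma> permutes {0..<2*m+6}}. perm_act \<sigma> ` P_II m)
     \<union> (\<Union>\<sigma>\<in>{\<sigma>. \<sigma> permutes {0..<2*m+6}}. perm_act \<sigma> ` P_III m)"
proof
  show "P_full m \<subseteq> P_I m
     \<union> (\<Union>\<sigma>\<in>{\<sigma>. \<sigma> permutes {0..<2*m+6}}. perm_act \<sigma> ` P_II m)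
     \<union> (\<Union>\<sigma>\<in>{\<sigma>. \<sigma> permutes {0..<2*m+6}}. perm_act \<sigma> ` P_III m)"
  proof
    fix x assume "x \<in> P_full m"
    then have "x \<in> cvx_hull (gens_full m)" unfolding P_full_def gens_full_def .
    then obtain M0 z0 d0 where "rep m x M0 z0 d0" using rep_hull by blast
    then obtain M z d where R: "rep m x M z d" and mn: "\<forall>M' z' d'. rep m x M' z' d' \<longrightarrow> M \<le> M'"
      using rep_min by blast
    have R0: "0 \<le> M" and R3: "\<forall>r<2*m+6. 0 \<le> z r \<and> z r \<le> 1 - M \<and> 0 \<le> d r \<and> d r \<le> M \<and> x r = z r + M/2 - d r"
      and Rd: "(\<Sum>r<2*m+6. d r) = 2*M"
      using R unfolding rep_def by blast+
    show "x \<in> P_I m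
     \<union> (\<Union>\<sigma>\<in>{\<sigma>. \<sigma> permutes {0..<2*m+6}}. perm_act \<sigma> ` P_II m)
     \<union> (\<Union>\<sigma>\<in>{\<sigma>. \<sigma> permutes {0..<2*m+6}}. perm_act \<sigma> ` P_III m)"
    proof (cases "M = 0")
      case True
      then have "x \<in> P_I m" using case_I R by simp
      then show ?thesis by (intro UnI1)
    next
      case False
      then have M0: "0 < M" using R0 by simp
      show ?thesis
      proof (cases "\<exists>c<2*m+6. d c = M \<and> z c = 0")
        case True
        then obtain c where "c < 2*m+6" "d c = M" "z c = 0" by blast
        then have "x \<in> (\<Union>\<sigma>\<in>{\<sigma>. \<sigma> permutes {0..<2*m+6}}. perm_act \<sigma> ` P_II m)" using case_II[OF R] by blast
        then show ?thesis by (intro UnI1 UnI2)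
      next
        case nA: False
        then have nA': "\<forall>c<2*m+6. d c = M \<longrightarrow> z c \<noteq> 0" by blast
        show ?thesis
        proof (cases "card {r. r < 2*m+6 \<and> 0 < d r} \<le> 3 \<and> (\<forall>r<2*m+6. 0 < d r \<longrightarrow> z r = 0 \<and> d r < M)")
          case True
          let ?T = "{r. r < 2*m+6 \<and> 0 < d r}"
          have Tsub: "?T \<subseteq> {..<2*m+6}" by auto
          have fT: "finite ?T" using Tsub finite_subset by blast
          have "sum d ?T = (\<Sum>r<2*m+6. d r)"
          proof (rule sum.mono_neutral_left)
            show "\<forall>i\<in>{..<2*m+6} - ?T. d i = 0"
            proof
              fix i assume "i \<in> {..<2*m+6} - ?T"
              then have "i < 2*m+6" "\<not> 0 < d i" by auto
              then show "d i = 0" using R3 by force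
            qed
          qed (use Tsub in auto)
          then have sT: "sum d ?T = 2 * M" using Rd by simp
          have "?T \<noteq> {}"
          proof
            assume e: "?T = {}"
            have "sum d ?T = 0" unfolding e by simp
            then show False using sT M0 by simp
          qed
          then have "sum d ?T < sum (\<lambda>_. M) ?T" using True fT by (intro sum_strict_mono) auto
          then have "2 * M < real (card ?T) * M" using sT by simp
          then have "2 < real (card ?T)" using M0 by (simp add: mult_less_cancel_right)
          then have "card ?T = 3" using True by linarith
          then have "x \<in> (\<Union>\<sigma>\<in>{\<sigma>. \<sigma> permutes {0..<2*m+6}}. perm_act \<sigma> ` P_III m)"
            using case_III[OF R] True by blast
          then show ?thesis by (intro UnI2)
        next
          case False
          obtain \<delta> z' d' where "0 < \<delta>" "rep m x (M - \<delta>) z' d'"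
            using reduce[OF R M0 nA' False] by blast
          then have "M \<le> M - \<delta>" using mn by blast
          then show ?thesis using \<open>0 < \<delta>\<close> by simp
        qed
      qed
    qed
  qed
  show "P_I m
     \<union> (\<Union>\<sigma>\<in>{\<sigma>. \<sigma> permutes {0..<2*m+6}}. perm_act \<sigma> ` P_II m)
     \<union> (\<Union>\<sigma>\<in>{\<sigma>. \<sigma> permutes {0..<2*m+6}}. perm_act \<sigma> ` P_III m) \<subseteq> P_full m"
    by (rule supset)
qed

end
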